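(* Let $(X,d)$ be a metric space and $T:X\to X$ a mapping for which there is $\lambda\in[0,1)$ with $d(Tx,Ty)\le\lambda\,d(x,y)$ for all $x,y\in X$. Then there exist an integer $p\ge 1$ and a constant $\alpha\in[0,\tfrac12)$ such that \[ d(T^p x,T^p y)\le \alpha\big(d(x,T^p y)+d(y,T^p x)\big)\quad\text{for all } x,y\in X. \]
   Context: $T^p$ denotes the $p$-fold composition of $T$ with itself. *)

theory Defs
  imports "HOL-Analysis.Analysis"
begin

end

theory Submission
  imports Defs
begin

lemma iter_lip:
  fixes T :: "'a::metric_space \<Rightarrow> 'a" and l :: real
  assumes "0 \<le> l" "\<forall>x y. dist (T x) (T y) \<le> l * dist x y"
  shows "dist ((T ^^ n) x) ((T ^^ n) y) \<le> l ^ n * dist x y"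
proof (induction n)
  case 0 then show ?case by simp
next
  case (Suc n)
  have "dist ((T ^^ Suc n) x) ((T ^^ Suc n) y) \<le> l * dist ((T ^^ n) x) ((T ^^ n) y)"
    using assms(2) by simp
  also have "\<dots> \<le> l * (l ^ n * dist x y)"
    using Suc assms(1) by (simp add: mult_left_mono)
  finally show ?case by simp
qed

theorem mainTheorem3:
  fixes T :: "'a::metric_space \<Rightarrow> 'a" and l :: real
  assumes "0 \<le> l" and "l < 1"
    and "\<forall>x y. dist (T x) (T y) \<le> l * dist x y"
  shows "\<exists>p::nat. p \<ge> 1 \<and> (\<exists>\<alpha>::real. 0 \<le> \<alpha> \<and> \<alpha> < 1/2 \<and>
           (\<forall>x y. dist ((T ^^ p) x) ((T ^^ p) y)
                   \<le> \<alpha> * (dist x ((T ^^ p) y) + dist y ((T ^^ p) x))))"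
proof -
  obtain n where n: "l ^ n < 1/3" using real_arch_pow_inv[of "1/3" l] assms(2) by auto
  define p where "p = Suc n"
  define k where "k = l ^ p"
  have k0: "0 \<le> k" using assms(1) by (simp add: k_def)
  have "k \<le> l ^ n" unfolding k_def p_def using assms(1,2)
    by (simp add: mult_left_le_one_le)
  with n have k3: "k < 1/3" by simp
  define a where "a = k / (1 - k)"
  have a0: "0 \<le> a" using k0 k3 by (simp add: a_def)
  have a2: "a < 1/2" using k0 k3 by (simp add: a_def field_simps)
  have "dist ((T ^^ p) x) ((T ^^ p) y) \<le> a * (dist x ((T ^^ p) y) + dist y ((T ^^ p) x))" for x y
  proof -
    let ?S = "T ^^ p"
    have L: "dist (?S x) (?S y) \<le> k * dist x y"
      using iter_lip[OF assms(1) assms(3)] k_def by blast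
    have tri: "dist x y \<le> dist x (?S y) + dist (?S x) (?S y) + dist y (?S x)"
    proof -
      have "dist x y \<le> dist x (?S y) + dist (?S y) y" by (rule dist_triangle)
      moreover have "dist (?S y) y \<le> dist (?S y) (?S x) + dist (?S x) y" by (rule dist_triangle)
      ultimately show ?thesis by (simp add: dist_commute)
    qed
    have "dist (?S x) (?S y) \<le> k * (dist x (?S y) + dist y (?S x)) + k * dist (?S x) (?S y)"
      using L mult_left_mono[OF tri k0] by (simp add: algebra_simps)
    then have "(1 - k) * dist (?S x) (?S y) \<le> k * (dist x (?S y) + dist y (?S x))"
      by (simp add: algebra_simps)
    then show ?thesis using k3 by (simp add: a_def field_simps)
  qed
  then show ?thesis using a0 a2
    by (intro exI[of _ p] conjI exI[of _ a]) (auto simp: p_def)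
qed

end
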